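(* Consider an RB instance satisfying Assumption 2 in which $P(s,a,s')>0$ for all $s,s'\in\mathbb S$, $a\in\{0,1\}$. Then there exist constants $\eta'>0$ and $K_{\mathrm{noise}}>0$ such that for all sufficiently large $N$, every time $t$, every system state with $\|X_t([N])-\mu^*\|_1\le\eta'$ (for which Optimal Local Control applied to all $N$ arms is defined), and every $\xi\in\mathbb R^{\mathbb S}$ with $\|\xi\|_2=1$ and $\mu^*\xi^\top=0$: if $\mathbf A_t$ is chosen by Optimal Local Control applied to all $N$ arms, then $$\mathbb E\Big[\big|\big(X_{t+1}([N])-\mu^*-(X_t([N])-\mu^* )\Phi\big)\xi^\top\big|\,\Big|\,X_t,\mathbf A_t\Big]\ge\frac{K_{\mathrm{noise}}}{\sqrt N}.$$
   Context: Single-armed MDP $(\mathbb S,\{0,1\},P,r)$, finite $\mathbb S$, budget $\alpha\in(0,1)$; $N$ arms transition independently by $P$ given states and actions. $X_t([N],s)=\frac1N\#\{i:S_t(i)=s\}$ (row vector $X_t([N])$). LP relaxation: maximize $\sum r(s,a)y(s,a)$ over $y\ge0$ s.t. $\sum_sy(s,1)=\alpha$, $\sum_{s',a}y(s',a)P(s',a,s)=\sum_ay(s,a)$ for all $s$, $\sum y=1$; $y^*$ a fixed optimal solution. $\bar\pi^*(a|s)=y^*(s,a)/(y^*(s,0)+y^*(s,1))$ if denominator $>0$, else $1/2$; $P_{\bar\pi^*}(s,s')=\sum_a\bar\pi^*(a|s)P(s,a,s')$; $\mu^*(s)=y^*(s,0)+y^*(s,1)$. Assumption 2: unique $\tilde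 s$ with $y^*(\tilde s,0),y^*(\tilde s,1)>0$. $\Phi=P_{\bar\pi^*}-\mathbf 1^\top\mu^*-(c-\alpha\mathbf 1)^\top(P_1(\tilde s)-P_0(\tilde s))$, $c=(\bar\pi^*(1|s))_s$, $P_a(\tilde s)=(P(\tilde s,a,s))_s$, $\mathbf 1$ all-ones row vector. $S^+,S^-,S^\emptyset$: states with ($y^*(s,1)>0=y^*(s,0)$), ($y^*(s,1)=0<y^*(s,0)$), ($y^*(s,1)=y^*(s,0)=0$). Randomized rounding of $c\ge0$: $\lceil c\rceil$ w.p. $c-\lfloor c\rfloor$, else $\lfloor c\rfloor$. Optimal Local Control applied to all $N$ arms with $z(s)$ arms in state $s$, defined when $\sum_{s\neq\tilde s}\bar\pi^*(1|s)z(s)\le\alpha N-|S^\emptyset|-1$ and $\sum_{s\neq\tilde s}\bar\pi^*(0|s)z(s)\le(1-\alpha)N-|S^\emptyset|-1$: let $B$ be a randomized rounding of $\alpha N$; activate all arms in $S^+$, none in $S^-$, a randomized rounding of $z(s)/2$ arms in each $s\in S^\emptyset$, and arms in $\tilde s$ so that exactly $B$ are active. *)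

theory Defs
  imports "HOL-Probability.Probability"
begin

(* Single-armed MDP: finite state type 'a, actions bool (False = action 0, True = action 1),
   transition kernel P s a :: 'a pmf, i.e. P(s,a,s') = pmf (P s a) s'. *)

definition lp_feasible :: "('a::finite \<Rightarrow> bool \<Rightarrow> 'a pmf) \<Rightarrow> real \<Rightarrow> ('a \<Rightarrow> bool \<Rightarrow> real) \<Rightarrow> bool" where
  "lp_feasible P \<alpha> y \<longleftrightarrow>
     (\<forall>s a. y s a \<ge> 0) \<and>
     (\<Sum>s\<in>UNIV. y s True) = \<alpha> \<and>
     (\<forall>s. (\<Sum>s'\<in>UNIV. \<Sum>a\<in>UNIV. y s' a * pmf (P s' a) s) = (\<Sum>a\<in>UNIV. y s a)) \<and>
     (\<Sum>s\<in>UNIV. \<Sum>a\<in>UNIV. y s a) = 1"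

definition lp_value :: "('a::finite \<Rightarrow> bool \<Rightarrow> real) \<Rightarrow> ('a \<Rightarrow> bool \<Rightarrow> real) \<Rightarrow> real" where
  "lp_value r y = (\<Sum>s\<in>UNIV. \<Sum>a\<in>UNIV. r s a * y s a)"

definition lp_optimal :: "('a::finite \<Rightarrow> bool \<Rightarrow> 'a pmf) \<Rightarrow> ('a \<Rightarrow> bool \<Rightarrow> real) \<Rightarrow> real \<Rightarrow> ('a \<Rightarrow> bool \<Rightarrow> real) \<Rightarrow> bool" where
  "lp_optimal P r \<alpha> y \<longleftrightarrow> lp_feasible P \<alpha> y \<and>
     (\<forall>y'. lp_feasible P \<alpha> y' \<longrightarrow> lp_value r y' \<le> lp_value r y)"

definition mu_star :: "('a \<Rightarrow> bool \<Rightarrow> real) \<Rightarrow> 'a \<Rightarrow> real" where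
  "mu_star y s = y s False + y s True"

definition pibar :: "('a \<Rightarrow> bool \<Rightarrow> real) \<Rightarrow> 'a \<Rightarrow> bool \<Rightarrow> real" where
  "pibar y s a = (if mu_star y s > 0 then y s a / mu_star y s else 1/2)"

definition P_pibar :: "('a::finite \<Rightarrow> bool \<Rightarrow> 'a pmf) \<Rightarrow> ('a \<Rightarrow> bool \<Rightarrow> real) \<Rightarrow> 'a \<Rightarrow> 'a \<Rightarrow> real" where
  "P_pibar P y s s' = (\<Sum>a\<in>UNIV. pibar y s a * pmf (P s a) s')"

(* \<Phi> = P_{\<bar>\<pi>*} - 1^T \<mu>* - (c - \<alpha> 1)^T (P_1(s~) - P_0(s~)),  with c(s) = \<bar>\<pi>*(1|s) *)
definition Phi :: "('a::finite \<Rightarrow> bool \<Rightarrow> 'a pmf) \<Rightarrow> real \<Rightarrow> ('a \<Rightarrow> bool \<Rightarrow> real) \<Rightarrow> 'a \<Rightarrow> 'a \<Rightarrow> 'a \<Rightarrow> real" where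
  "Phi P \<alpha> y st s s' = P_pibar P y s s' - mu_star y s'
      - (pibar y s True - \<alpha>) * (pmf (P st True) s' - pmf (P st False) s')"

definition S_plus :: "('a \<Rightarrow> bool \<Rightarrow> real) \<Rightarrow> 'a set" where
  "S_plus y = {s. y s True > 0 \<and> y s False = 0}"
definition S_minus :: "('a \<Rightarrow> bool \<Rightarrow> real) \<Rightarrow> 'a set" where
  "S_minus y = {s. y s True = 0 \<and> y s False > 0}"
definition S_empty :: "('a \<Rightarrow> bool \<Rightarrow> real) \<Rightarrow> 'a set" where
  "S_empty y = {s. y s True = 0 \<and> y s False = 0}"

definition rround :: "real \<Rightarrow> int pmf" where
  "rround c = map_pmf (\<lambda>b. if b then \<lceil>c\<rceil> else \<lfloor>c\<rfloor>) (bernoulli_pmf (c - of_int \<lfloor>c\<rfloor>))"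

definition cnt :: "nat \<Rightarrow> (nat \<Rightarrow> 'a) \<Rightarrow> 'a \<Rightarrow> nat" where
  "cnt N S s = card {i. i < N \<and> S i = s}"

definition Xfrac :: "nat \<Rightarrow> (nat \<Rightarrow> 'a) \<Rightarrow> 'a \<Rightarrow> real" where
  "Xfrac N S s = real (cnt N S s) / real N"

definition olc_defined :: "real \<Rightarrow> ('a::finite \<Rightarrow> bool \<Rightarrow> real) \<Rightarrow> 'a \<Rightarrow> nat \<Rightarrow> (nat \<Rightarrow> 'a) \<Rightarrow> bool" where
  "olc_defined \<alpha> y st N S \<longleftrightarrow>
     (\<Sum>s\<in>UNIV - {st}. pibar y s True * real (cnt N S s)) \<le> \<alpha> * real N - real (card (S_empty y)) - 1 \<and>
     (\<Sum>s\<in>UNIV - {st}. pibar y s False * real (cnt N S s)) \<le> (1 - \<alpha>) * real N - real (card (S_empty y)) - 1"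

(* act is a possible realization of the action vector chosen by Optimal Local Control
   (state st = s~): all arms in S+ active, none in S-, a randomized rounding of z(s)/2
   arms active in each s in S\<emptyset>, arms in s~ chosen so that exactly B are active,
   B a randomized rounding of \<alpha> N. *)
definition olc_action :: "real \<Rightarrow> ('a \<Rightarrow> bool \<Rightarrow> real) \<Rightarrow> 'a \<Rightarrow> nat \<Rightarrow> (nat \<Rightarrow> 'a) \<Rightarrow> (nat \<Rightarrow> bool) \<Rightarrow> bool" where
  "olc_action \<alpha> y st N S act \<longleftrightarrow>
     (\<forall>i<N. S i \<in> S_plus y \<longrightarrow> act i) \<and>
     (\<forall>i<N. S i \<in> S_minus y \<longrightarrow> \<not> act i) \<and>
     (\<forall>s\<in>S_empty y. int (card {i. i < N \<and> S i = s \<and> act i}) \<in> set_pmf (rround (real (cnt N S s) / 2))) \<and>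
     int (card {i. i < N \<and> act i}) \<in> set_pmf (rround (\<alpha> * real N))"

definition next_states :: "('a \<Rightarrow> bool \<Rightarrow> 'a pmf) \<Rightarrow> nat \<Rightarrow> (nat \<Rightarrow> 'a) \<Rightarrow> (nat \<Rightarrow> bool) \<Rightarrow> (nat \<Rightarrow> 'a) pmf" where
  "next_states P N S act = Pi_pmf {..<N} undefined (\<lambda>i. P (S i) (act i))"

end

theory Submission
  imports Defs
begin


lemma fin_Pi: "finite A \<Longrightarrow> finite (set_pmf (Pi_pmf A d (p :: nat \<Rightarrow> 'a::finite pmf)))"
  by (simp add: set_Pi_pmf finite_PiE_dflt)

lemma int_fin: "finite (set_pmf M) \<Longrightarrow> integrable (measure_pmf M) (f :: _ \<Rightarrow> real)"
  by (rule integrable_measure_pmf_finite)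

lemma pair_exp:
  assumes "finite (set_pmf A)" "finite (set_pmf B)"
  shows "measure_pmf.expectation (pair_pmf A B) (f :: _ \<Rightarrow> real) =
         measure_pmf.expectation A (\<lambda>a. measure_pmf.expectation B (\<lambda>b. f (a,b)))"
proof -
  have "measure_pmf.expectation (pair_pmf A B) f = (\<Sum>z\<in>set_pmf A \<times> set_pmf B. f z * pmf (pair_pmf A B) z)"
    using assms by (intro integral_measure_pmf_real) auto
  also have "\<dots> = (\<Sum>a\<in>set_pmf A. \<Sum>b\<in>set_pmf B. f (a,b) * (pmf A a * pmf B b))"
    by (subst sum.cartesian_product) (auto simp: pmf_pair intro!: sum.cong)
  also have "\<dots> = (\<Sum>a\<in>set_pmf A. (\<Sum>b\<in>set_pmf B. f (a,b) * pmf B b) * pmf A a)"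
    by (simp add: sum_distrib_right sum_distrib_left mult.assoc mult.commute mult.left_commute)
  also have "\<dots> = (\<Sum>a\<in>set_pmf A. measure_pmf.expectation B (\<lambda>b. f (a,b)) * pmf A a)"
    using assms by (intro sum.cong refl, subst integral_measure_pmf_real[of "set_pmf B"]) auto
  also have "\<dots> = measure_pmf.expectation A (\<lambda>a. measure_pmf.expectation B (\<lambda>b. f (a,b)))"
    using assms by (intro integral_measure_pmf_real[symmetric]) auto
  finally show ?thesis .
qed

lemma Pi_insert_exp:
  fixes p :: "nat \<Rightarrow> 'a::finite pmf" and F :: "(nat \<Rightarrow> 'a) \<Rightarrow> real"
  assumes "finite A" "x \<notin> A"
  shows "measure_pmf.expectation (Pi_pmf (insert x A) d p) F =
         measure_pmf.expectation (p x) (\<lambda>y. measure_pmf.expectation (Pi_pmf A d p) (\<lambda>f. F (f(x:=y))))"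
  using assms by (simp add: Pi_pmf_insert pair_exp fin_Pi case_prod_unfold)

lemma sum_upd: "x \<notin> A \<Longrightarrow> (\<Sum>i\<in>A. g i ((f(x:=y)) i)) = (\<Sum>i\<in>A. g i (f i))"
  by (intro sum.cong) auto

lemma fin_pmf: "finite (set_pmf (q :: 'a::finite pmf))"
  by simp

lemma mom1:
  fixes p :: "nat \<Rightarrow> 'a::finite pmf" and g :: "nat \<Rightarrow> 'a \<Rightarrow> real"
  assumes "finite A" "\<forall>i\<in>A. measure_pmf.expectation (p i) (g i) = 0"
  shows "measure_pmf.expectation (Pi_pmf A d p) (\<lambda>f. \<Sum>i\<in>A. g i (f i)) = 0"
  using assms
proof (induction A rule: finite_induct)
  case empty then show ?case by simp
next
  case (insert x A)
  have "measure_pmf.expectation (Pi_pmf (insert x A) d p) (\<lambda>f. \<Sum>i\<in>insert x A. g i (f i))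
     = measure_pmf.expectation (p x) (\<lambda>y. measure_pmf.expectation (Pi_pmf A d p) (\<lambda>f. g x y + (\<Sum>i\<in>A. g i (f i))))"
    using insert by (simp add: Pi_insert_exp sum_upd fun_upd_same del: fun_upd_apply)
  also have "\<dots> = measure_pmf.expectation (p x) (g x)"
    using insert by (simp add: int_fin fin_Pi)
  finally show ?case using insert by simp
qed

lemma mom2:
  fixes p :: "nat \<Rightarrow> 'a::finite pmf" and g :: "nat \<Rightarrow> 'a \<Rightarrow> real"
  assumes "finite A" "\<forall>i\<in>A. measure_pmf.expectation (p i) (g i) = 0"
  shows "measure_pmf.expectation (Pi_pmf A d p) (\<lambda>f. (\<Sum>i\<in>A. g i (f i))^2)
       = (\<Sum>i\<in>A. measure_pmf.expectation (p i) (\<lambda>y. (g i y)^2))"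
  using assms
proof (induction A rule: finite_induct)
  case empty then show ?case by simp
next
  case (insert x A)
  let ?T = "\<lambda>f. \<Sum>i\<in>A. g i (f i)"
  have m1: "measure_pmf.expectation (Pi_pmf A d p) ?T = 0" using insert mom1 by blast
  have "measure_pmf.expectation (Pi_pmf (insert x A) d p) (\<lambda>f. (\<Sum>i\<in>insert x A. g i (f i))^2)
     = measure_pmf.expectation (p x) (\<lambda>y. measure_pmf.expectation (Pi_pmf A d p) (\<lambda>f. (g x y + ?T f)^2))"
    using insert by (simp add: Pi_insert_exp sum_upd fun_upd_same del: fun_upd_apply)
  also have "(\<lambda>y. measure_pmf.expectation (Pi_pmf A d p) (\<lambda>f. (g x y + ?T f)^2))
     = (\<lambda>y. (g x y)^2 + 2 * g x y * measure_pmf.expectation (Pi_pmf A d p) ?T + measure_pmf.expectation (Pi_pmf A d p) (\<lambda>f. (?T f)^2))"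
    using insert by (simp add: power2_sum int_fin fin_Pi add_ac del: integral_sum')
  also have "measure_pmf.expectation (p x) \<dots> = measure_pmf.expectation (p x) (\<lambda>y. (g x y)^2) + measure_pmf.expectation (Pi_pmf A d p) (\<lambda>f. (?T f)^2)"
    using insert m1 by (simp add: int_fin)
  finally show ?case using insert by simp
qed

lemma exp_le_const: "(\<And>x. f x \<le> c) \<Longrightarrow> measure_pmf.expectation (q :: 'a::finite pmf) f \<le> (c::real)"
  by (rule measure_pmf.integral_le_const) (auto simp: int_fin)

lemma lin4:
  fixes q :: "'a::finite pmf"
  shows "measure_pmf.expectation q (\<lambda>y. u y + 4 * v y * 0 + 6 * w y * c2 + 4 * z y * c3 + (c4::real))
     = measure_pmf.expectation q u + 6 * c2 * measure_pmf.expectation q w + 4 * c3 * measure_pmf.expectation q z + c4"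
proof -
  have i: "integrable (measure_pmf q) f" for f :: "'a \<Rightarrow> real" by (rule int_fin) simp
  show ?thesis
    by (simp add: Bochner_Integration.integral_add[OF i i] i mult.assoc mult.left_commute)
qed

lemma mom4:
  fixes p :: "nat \<Rightarrow> 'a::finite pmf" and g :: "nat \<Rightarrow> 'a \<Rightarrow> real"
  assumes "finite A" "\<forall>i\<in>A. measure_pmf.expectation (p i) (g i) = 0" "\<forall>i x. \<bar>g i x\<bar> \<le> b"
  shows "measure_pmf.expectation (Pi_pmf A d p) (\<lambda>f. (\<Sum>i\<in>A. g i (f i))^4)
       \<le> 3 * (real (card A))^2 * b^4"
  using assms
proof (induction A rule: finite_induct)
  case empty then show ?case by simp
next
  case (insert x A)
  let ?T = "\<lambda>f. \<Sum>i\<in>A. g i (f i)"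
  let ?E = "measure_pmf.expectation (Pi_pmf A d p)"
  have b0: "0 \<le> b" using insert(5) by (meson abs_ge_zero order_trans)
  have m1: "?E ?T = 0" using insert mom1 by blast
  have m2: "?E (\<lambda>f. (?T f)^2) = (\<Sum>i\<in>A. measure_pmf.expectation (p i) (\<lambda>y. (g i y)^2))"
    using insert mom2 by blast
  have sq: "(g i y)^2 \<le> b^2" for i y
    using insert(5) by (metis abs_ge_zero power2_abs power_mono)
  have m2b: "?E (\<lambda>f. (?T f)^2) \<le> real (card A) * b^2"
  proof -
    have "\<And>i. measure_pmf.expectation (p i) (\<lambda>y. (g i y)^2) \<le> b^2" by (rule exp_le_const) (rule sq)
    then show ?thesis unfolding m2 using sum_mono[of A "\<lambda>i. measure_pmf.expectation (p i) (\<lambda>y. (g i y)^2)" "\<lambda>_. b^2"]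
      by simp
  qed
  have m2n: "0 \<le> ?E (\<lambda>f. (?T f)^2)" by simp
  have "measure_pmf.expectation (Pi_pmf (insert x A) d p) (\<lambda>f. (\<Sum>i\<in>insert x A. g i (f i))^4)
     = measure_pmf.expectation (p x) (\<lambda>y. ?E (\<lambda>f. (g x y + ?T f)^4))"
    using insert by (simp add: Pi_insert_exp sum_upd fun_upd_same del: fun_upd_apply)
  also have "(\<lambda>y. ?E (\<lambda>f. (g x y + ?T f)^4))
     = (\<lambda>y. (g x y)^4 + 4 * (g x y)^3 * ?E ?T + 6 * (g x y)^2 * ?E (\<lambda>f. (?T f)^2)
            + 4 * g x y * ?E (\<lambda>f. (?T f)^3) + ?E (\<lambda>f. (?T f)^4))"
  proof
    fix y
    have e: "(g x y + ?T f)^4 = (g x y)^4 + 4 * (g x y)^3 * ?T f + 6 * (g x y)^2 * (?T f)^2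
            + 4 * g x y * (?T f)^3 + (?T f)^4" for f
      by (simp add: power4_eq_xxxx power3_eq_cube power2_eq_square algebra_simps)
    show "?E (\<lambda>f. (g x y + ?T f)^4) = (g x y)^4 + 4 * (g x y)^3 * ?E ?T + 6 * (g x y)^2 * ?E (\<lambda>f. (?T f)^2)
            + 4 * g x y * ?E (\<lambda>f. (?T f)^3) + ?E (\<lambda>f. (?T f)^4)"
      unfolding e using insert by (simp add: int_fin fin_Pi)
  qed
  also have "measure_pmf.expectation (p x) \<dots> = measure_pmf.expectation (p x) (\<lambda>y. (g x y)^4)
       + 6 * ?E (\<lambda>f. (?T f)^2) * measure_pmf.expectation (p x) (\<lambda>y. (g x y)^2)
       + 4 * ?E (\<lambda>f. (?T f)^3) * measure_pmf.expectation (p x) (g x) + ?E (\<lambda>f. (?T f)^4)"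
    unfolding m1 by (rule lin4)
  also have "\<dots> = measure_pmf.expectation (p x) (\<lambda>y. (g x y)^4)
       + 6 * ?E (\<lambda>f. (?T f)^2) * measure_pmf.expectation (p x) (\<lambda>y. (g x y)^2)
       + ?E (\<lambda>f. (?T f)^4)"
  proof -
    have h: "measure_pmf.expectation (p x) (g x) = 0" using insert(4) by blast
    show ?thesis unfolding h by (simp only: mult_zero_right add_0_right)
  qed
  also have "\<dots> \<le> b^4 + 6 * (real (card A) * b^2) * b^2 + 3 * (real (card A))^2 * b^4"
  proof -
    have "(g x y)^4 \<le> b^4" for y
    proof -
      have "\<bar>g x y\<bar>^4 \<le> b^4" by (rule power_mono) (use insert(5) in auto)
      then show ?thesis by simp
    qed
    then have a: "measure_pmf.expectation (p x) (\<lambda>y. (g x y)^4) \<le> b^4" by (rule exp_le_const)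
    have c: "measure_pmf.expectation (p x) (\<lambda>y. (g x y)^2) \<le> b^2" by (rule exp_le_const) (rule sq)
    have c0: "0 \<le> measure_pmf.expectation (p x) (\<lambda>y. (g x y)^2)" by simp
    have m: "?E (\<lambda>f. (?T f)^2) * measure_pmf.expectation (p x) (\<lambda>y. (g x y)^2) \<le> (real (card A) * b^2) * b^2"
      by (rule mult_mono[OF m2b c]) (use b0 in auto)
    have ih: "?E (\<lambda>f. (?T f)^4) \<le> 3 * (real (card A))^2 * b^4"
      using insert.IH insert(4) insert(5) by blast
    show ?thesis using a m ih by linarith
  qed
  also have "\<dots> \<le> 3 * (real (card (insert x A)))^2 * b^4"
  proof -
    have cA: "real (card (insert x A)) = real (card A) + 1" using insert(1,2) by simp
    have "b^4 + 6 * (real (card A) * b^2) * b^2 + 3 * (real (card A))^2 * b^4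
         = 3 * (real (card A) + 1)^2 * b^4 - 2 * b^4"
      by (simp add: power2_eq_square power4_eq_xxxx algebra_simps)
    moreover have "0 \<le> b^4" using b0 by simp
    ultimately show ?thesis unfolding cA by linarith
  qed
  finally show ?case .
qed




lemma pw: assumes "t > 0" shows "(y::real)^2 \<le> t * \<bar>y\<bar> + y^4 / t^2"
proof (cases "\<bar>y\<bar> \<le> t")
  case True
  have "y^2 = \<bar>y\<bar> * \<bar>y\<bar>" by (simp add: power2_eq_square abs_mult_self_eq)
  also have "\<dots> \<le> t * \<bar>y\<bar>" by (rule mult_right_mono) (use True in auto)
  finally have "y^2 \<le> t * \<bar>y\<bar>" .
  moreover have "0 \<le> y^4 / t^2" by simp
  ultimately show ?thesis by linarith
next
  case False
  then have "t * t \<le> \<bar>y\<bar> * \<bar>y\<bar>" using assms by (intro mult_mono) auto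
  then have "t^2 \<le> y^2" by (simp add: power2_eq_square abs_mult_self_eq)
  then have "t^2 * y^2 \<le> y^2 * y^2" by (intro mult_right_mono) auto
  then have "y^2 \<le> y^4 / t^2" using assms by (simp add: field_simps power4_eq_xxxx power2_eq_square)
  moreover have "0 \<le> t * \<bar>y\<bar>" using assms by simp
  ultimately show ?thesis by linarith
qed

lemma anti:
  assumes "finite (set_pmf M)" "t > 0"
  shows "measure_pmf.expectation M (\<lambda>x. (Z x)^2) - measure_pmf.expectation M (\<lambda>x. (Z x)^4) / t^2
         \<le> t * measure_pmf.expectation M (\<lambda>x. \<bar>Z x :: real\<bar>)"
proof -
  have "measure_pmf.expectation M (\<lambda>x. (Z x)^2) \<le> measure_pmf.expectation M (\<lambda>x. t * \<bar>Z x\<bar> + (Z x)^4 / t^2)"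
    by (rule integral_mono) (use assms pw in \<open>auto simp: int_fin\<close>)
  also have "\<dots> = t * measure_pmf.expectation M (\<lambda>x. \<bar>Z x\<bar>) + measure_pmf.expectation M (\<lambda>x. (Z x)^4) / t^2"
    using assms by (simp add: int_fin)
  finally show ?thesis by simp
qed

lemma shift:
  assumes "finite (set_pmf M)" "measure_pmf.expectation M Z = 0" "k \<ge> 0"
  shows "k * measure_pmf.expectation M (\<lambda>x. \<bar>Z x :: real\<bar>) / 2 \<le> measure_pmf.expectation M (\<lambda>x. \<bar>k * Z x + d\<bar>)"
proof -
  have "\<bar>measure_pmf.expectation M (\<lambda>x. k * Z x + d)\<bar> \<le> measure_pmf.expectation M (\<lambda>x. \<bar>k * Z x + d\<bar>)"
    by (rule integral_abs_bound)
  moreover have "measure_pmf.expectation M (\<lambda>x. k * Z x + d) = d"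
    using assms by (simp add: int_fin)
  ultimately have 1: "\<bar>d\<bar> \<le> measure_pmf.expectation M (\<lambda>x. \<bar>k * Z x + d\<bar>)" by simp
  have "measure_pmf.expectation M (\<lambda>x. k * \<bar>Z x\<bar>) \<le> measure_pmf.expectation M (\<lambda>x. \<bar>k * Z x + d\<bar> + \<bar>d\<bar>)"
    by (rule integral_mono) (use assms in \<open>auto simp: int_fin abs_mult\<close>)
  also have "\<dots> = measure_pmf.expectation M (\<lambda>x. \<bar>k * Z x + d\<bar>) + \<bar>d\<bar>"
    using assms by (simp add: int_fin)
  finally have 2: "k * measure_pmf.expectation M (\<lambda>x. \<bar>Z x\<bar>) \<le> measure_pmf.expectation M (\<lambda>x. \<bar>k * Z x + d\<bar>) + \<bar>d\<bar>"
    by simp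
  show ?thesis using 1 2 by linarith
qed

lemma var_lb:
  fixes q :: "'a::finite pmf" and \<xi> :: "'a \<Rightarrow> real"
  assumes "\<forall>x. pm \<le> pmf q x" "u \<noteq> w" "0 \<le> pm"
  shows "pm * (\<xi> u - \<xi> w)^2 / 2 \<le> measure_pmf.expectation q (\<lambda>x. (\<xi> x - m)^2)"
proof -
  have e: "measure_pmf.expectation q (\<lambda>x. (\<xi> x - m)^2) = (\<Sum>x\<in>UNIV. (\<xi> x - m)^2 * pmf q x)"
    by (rule integral_measure_pmf_real) auto
  have h1: "(\<Sum>x\<in>{u,w}. (\<xi> x - m)^2 * pmf q x) \<le> (\<Sum>x\<in>UNIV. (\<xi> x - m)^2 * pmf q x)"
    by (rule sum_mono2) auto
  have h2: "(\<Sum>x\<in>{u,w}. (\<xi> x - m)^2 * pmf q x) = (\<xi> u - m)^2 * pmf q u + (\<xi> w - m)^2 * pmf q w"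
    using assms by simp
  have h3: "(\<xi> u - m)^2 * pm \<le> (\<xi> u - m)^2 * pmf q u" "(\<xi> w - m)^2 * pm \<le> (\<xi> w - m)^2 * pmf q w"
    by (rule mult_left_mono, use assms(1) in blast, simp)+
  have h4: "(\<xi> u - \<xi> w)^2 / 2 \<le> (\<xi> u - m)^2 + (\<xi> w - m)^2"
  proof -
    have "(\<xi> u - m)^2 + (\<xi> w - m)^2 - (\<xi> u - \<xi> w)^2 / 2 = (\<xi> u + \<xi> w - 2*m)^2 / 2"
      by (simp add: power2_eq_square field_simps)
    moreover have "0 \<le> (\<xi> u + \<xi> w - 2*m)^2 / 2" by simp
    ultimately show ?thesis by linarith
  qed
  have pm0: "0 \<le> pm" by (rule assms(3))
  have h5: "pm * ((\<xi> u - \<xi> w)^2 / 2) \<le> pm * ((\<xi> u - m)^2 + (\<xi> w - m)^2)"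
    by (rule mult_left_mono[OF h4 pm0])
  have h6: "pm * ((\<xi> u - m)^2 + (\<xi> w - m)^2) = (\<xi> u - m)^2 * pm + (\<xi> w - m)^2 * pm"
    by (simp add: algebra_simps)
  show ?thesis unfolding e using h1 h2 h3 h5 h6 by simp
qed

lemma xi_sep:
  fixes \<xi> \<mu> :: "'a::finite \<Rightarrow> real"
  assumes n1: "(\<Sum>s\<in>UNIV. (\<xi> s)^2) = 1" and o: "(\<Sum>s\<in>UNIV. \<mu> s * \<xi> s) = 0"
    and mnn: "\<forall>s. \<mu> s \<ge> 0" and m1: "(\<Sum>s\<in>UNIV. \<mu> s) = 1"
  shows "\<exists>u w. u \<noteq> w \<and> 1 / real CARD('a) \<le> (\<xi> u - \<xi> w)^2"
proof -
  have cpos: "0 < real CARD('a)" by simp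
  have "\<exists>u. 1 / real CARD('a) \<le> (\<xi> u)^2"
  proof (rule ccontr)
    assume "\<not> ?thesis"
    then have "\<forall>u. (\<xi> u)^2 < 1 / real CARD('a)" by (simp add: not_le)
    then have "(\<Sum>s\<in>UNIV. (\<xi> s)^2) < (\<Sum>s\<in>(UNIV::'a set). 1 / real CARD('a))"
      by (intro sum_strict_mono) auto
    also have "\<dots> = 1" using cpos by simp
    finally show False using n1 by simp
  qed
  then obtain u where u: "1 / real CARD('a) \<le> (\<xi> u)^2" by blast
  have u0: "\<xi> u \<noteq> 0" using u cpos by (auto simp: field_simps)
  have "\<exists>s0. \<mu> s0 > 0"
  proof (rule ccontr)
    assume "\<not> ?thesis"
    then have "\<forall>s. \<mu> s = 0" using mnn by (meson not_less order_antisym)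
    then show False using m1 by simp
  qed
  then obtain s0 where s0: "\<mu> s0 > 0" by blast
  show ?thesis
  proof (cases "\<xi> u > 0")
    case True
    have "\<exists>w. \<xi> w \<le> 0"
    proof (rule ccontr)
      assume "\<not> ?thesis"
      then have pos: "\<forall>w. \<xi> w > 0" by (simp add: not_le)
      have "0 < (\<Sum>s\<in>UNIV. \<mu> s * \<xi> s)"
        by (rule sum_pos2[of UNIV s0]) (use s0 pos mnn in \<open>auto intro: mult_nonneg_nonneg less_imp_le\<close>)
      then show False using o by simp
    qed
    then obtain w where w: "\<xi> w \<le> 0" by blast
    have "(\<xi> u)^2 \<le> (\<xi> u - \<xi> w)^2" by (rule power_mono) (use True w in auto)
    moreover have "u \<noteq> w" using True w by auto
    ultimately show ?thesis using u by (meson order_trans)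
  next
    case False
    then have neg: "\<xi> u < 0" using u0 by simp
    have "\<exists>w. \<xi> w \<ge> 0"
    proof (rule ccontr)
      assume "\<not> ?thesis"
      then have ng: "\<forall>w. \<xi> w < 0" by (simp add: not_le)
      have "0 < (\<Sum>s\<in>UNIV. \<mu> s * (- \<xi> s))"
        by (rule sum_pos2[of UNIV s0]) (use s0 ng mnn in \<open>auto intro: mult_pos_neg mult_nonneg_nonpos less_imp_le\<close>)
      then show False using o by (simp add: sum_negf)
    qed
    then obtain w where w: "\<xi> w \<ge> 0" by blast
    have "(- \<xi> u)^2 \<le> (\<xi> w - \<xi> u)^2" by (rule power_mono) (use neg w in auto)
    then have "(\<xi> u)^2 \<le> (\<xi> u - \<xi> w)^2" by (simp add: power2_commute)
    moreover have "u \<noteq> w" using neg w by auto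
    ultimately show ?thesis using u by (meson order_trans)
  qed
qed

lemma cnt_sum:
  fixes \<xi> :: "'a::finite \<Rightarrow> real"
  shows "(\<Sum>s\<in>UNIV. real (cnt N S' s) * \<xi> s) = (\<Sum>i<N. \<xi> (S' i))"
proof -
  have "(\<Sum>i<N. \<xi> (S' i)) = (\<Sum>s\<in>UNIV. \<Sum>i\<in>{x. x \<in> {..<N} \<and> S' x = s}. \<xi> (S' i))"
    by (rule sum.group[symmetric]) auto
  also have "\<dots> = (\<Sum>s\<in>UNIV. \<Sum>i\<in>{x. x \<in> {..<N} \<and> S' x = s}. \<xi> s)"
    by (intro sum.cong refl) auto
  also have "\<dots> = (\<Sum>s\<in>UNIV. real (cnt N S' s) * \<xi> s)"
    by (simp add: cnt_def)
  finally show ?thesis by simp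
qed


lemma core:
  fixes P :: "'a::finite \<Rightarrow> bool \<Rightarrow> 'a pmf" and \<xi> :: "'a \<Rightarrow> real"
  assumes N: "N \<ge> 1" and pm: "0 < pm" "\<forall>s a s'. pm \<le> pmf (P s a) s'"
    and uw: "u \<noteq> w" "1 / real CARD('a) \<le> (\<xi> u - \<xi> w)^2"
    and xb: "\<forall>x. \<bar>\<xi> x\<bar> \<le> 1"
    and v_def: "v = pm / (2 * real CARD('a))"
  shows "v / (4 * sqrt (96 / v)) / sqrt (real N) \<le> measure_pmf.expectation (next_states P N S act)
           (\<lambda>S'. \<bar>(1 / real N) * (\<Sum>i<N. \<xi> (S' i)) + d\<bar>)"
proof -
  define p where "p = (\<lambda>i. P (S i) (act i))"
  define m where "m = (\<lambda>i. measure_pmf.expectation (p i) \<xi>)"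
  define g where "g = (\<lambda>i x. \<xi> x - m i)"
  define Z where "Z = (\<lambda>f::nat \<Rightarrow> 'a. \<Sum>i\<in>{..<N}. g i (f i))"
  define M where "M = next_states P N S act"
  have M: "M = Pi_pmf {..<N} undefined p" unfolding M_def next_states_def p_def by simp
  have finM: "finite (set_pmf M)" unfolding M by (rule fin_Pi) simp
  have Eg: "\<forall>i\<in>{..<N}. measure_pmf.expectation (p i) (g i) = 0"
    unfolding g_def m_def by (simp add: int_fin)
  have mb: "\<bar>m i\<bar> \<le> 1" for i
  proof -
    have "\<bar>m i\<bar> \<le> measure_pmf.expectation (p i) (\<lambda>x. \<bar>\<xi> x\<bar>)" unfolding m_def by (rule integral_abs_bound)
    also have "\<dots> \<le> 1" by (rule exp_le_const) (use xb in auto)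
    finally show ?thesis .
  qed
  have gb: "\<forall>i x. \<bar>g i x\<bar> \<le> 2"
  proof (intro allI)
    fix i x
    show "\<bar>g i x\<bar> \<le> 2" using xb[rule_format, of x] mb[of i] unfolding g_def by arith
  qed
  have v0: "0 < v" unfolding v_def using pm by simp
  have Vg: "v \<le> measure_pmf.expectation (p i) (\<lambda>x. (g i x)^2)" for i
  proof -
    have "pm * (\<xi> u - \<xi> w)^2 / 2 \<le> measure_pmf.expectation (p i) (\<lambda>x. (\<xi> x - m i)^2)"
      by (rule var_lb) (use pm uw in \<open>auto simp: p_def\<close>)
    moreover have "v \<le> pm * (\<xi> u - \<xi> w)^2 / 2"
    proof -
      have "pm * (1 / real CARD('a)) \<le> pm * (\<xi> u - \<xi> w)^2" by (rule mult_left_mono) (use uw pm in auto)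
      then show ?thesis unfolding v_def by (simp add: field_simps)
    qed
    ultimately show ?thesis unfolding g_def by linarith
  qed
  have Z2: "real N * v \<le> measure_pmf.expectation M (\<lambda>f. (Z f)^2)"
  proof -
    have "measure_pmf.expectation M (\<lambda>f. (Z f)^2) = (\<Sum>i\<in>{..<N}. measure_pmf.expectation (p i) (\<lambda>y. (g i y)^2))"
      unfolding M Z_def by (rule mom2) (use Eg in auto)
    moreover have "(\<Sum>i\<in>{..<N}. v) \<le> (\<Sum>i\<in>{..<N}. measure_pmf.expectation (p i) (\<lambda>y. (g i y)^2))"
      by (rule sum_mono) (rule Vg)
    ultimately show ?thesis by simp
  qed
  have Z4: "measure_pmf.expectation M (\<lambda>f. (Z f)^4) \<le> 48 * (real N)^2"
  proof -
    have "measure_pmf.expectation M (\<lambda>f. (Z f)^4) \<le> 3 * (real (card {..<N}))^2 * 2^4"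
      unfolding M Z_def by (rule mom4) (use Eg gb in auto)
    then show ?thesis by simp
  qed
  have EZ: "measure_pmf.expectation M Z = 0" unfolding M Z_def by (rule mom1) (use Eg in auto)
  define c where "c = sqrt (96 / v)"
  have c0: "0 < c" unfolding c_def using v0 by simp
  have c2: "c^2 = 96 / v" unfolding c_def using v0 by simp
  define t where "t = c * sqrt (real N)"
  have Npos: "0 < real N" using N by simp
  have t0: "0 < t" unfolding t_def using c0 Npos by simp
  have t2: "t^2 = 96 * real N / v" unfolding t_def using c2 Npos by (simp add: power_mult_distrib)
  have an: "measure_pmf.expectation M (\<lambda>f. (Z f)^2) - measure_pmf.expectation M (\<lambda>f. (Z f)^4) / t^2
      \<le> t * measure_pmf.expectation M (\<lambda>f. \<bar>Z f\<bar>)"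
    by (rule anti[OF finM t0])
  have q: "measure_pmf.expectation M (\<lambda>f. (Z f)^4) / t^2 \<le> real N * v / 2"
  proof -
    have "measure_pmf.expectation M (\<lambda>f. (Z f)^4) / t^2 \<le> 48 * (real N)^2 / t^2"
      by (rule divide_right_mono[OF Z4]) simp
    also have "\<dots> = real N * v / 2" unfolding t2 using Npos v0 by (simp add: field_simps power2_eq_square)
    finally show ?thesis .
  qed
  let ?A = "measure_pmf.expectation M (\<lambda>f. \<bar>Z f\<bar>)"
  have key: "real N * v / 2 \<le> t * ?A" using an q Z2 by linarith
  have sh: "(1 / real N) * ?A / 2 \<le> measure_pmf.expectation M (\<lambda>f. \<bar>(1 / real N) * Z f + (d + (\<Sum>i<N. m i) / real N)\<bar>)"
    by (rule shift[OF finM EZ]) simp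
  have eq: "(\<lambda>S'. \<bar>(1 / real N) * (\<Sum>i<N. \<xi> (S' i)) + d\<bar>) = (\<lambda>f. \<bar>(1 / real N) * Z f + (d + (\<Sum>i<N. m i) / real N)\<bar>)"
  proof
    fix f :: "nat \<Rightarrow> 'a"
    have "(\<Sum>i<N. \<xi> (f i)) = Z f + (\<Sum>i<N. m i)" unfolding Z_def g_def by (simp add: sum_subtractf)
    then show "\<bar>(1 / real N) * (\<Sum>i<N. \<xi> (f i)) + d\<bar> = \<bar>(1 / real N) * Z f + (d + (\<Sum>i<N. m i) / real N)\<bar>"
      by (simp add: distrib_left add_divide_distrib)
  qed
  have fin: "v / (4 * c) / sqrt (real N) \<le> (1 / real N) * ?A / 2"
  proof -
    have sN: "0 < sqrt (real N)" using Npos by simp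
    have ss: "sqrt (real N) * sqrt (real N) = real N" using Npos by simp
    have k1: "real N * v \<le> 2 * (c * sqrt (real N) * ?A)" using key unfolding t_def by linarith
    have k2: "sqrt (real N) * (sqrt (real N) * v) = real N * v" using ss by (simp add: mult.assoc[symmetric])
    have k3: "sqrt (real N) * (2 * c * ?A) = 2 * (c * sqrt (real N) * ?A)" by (simp add: algebra_simps)
    have "sqrt (real N) * (sqrt (real N) * v) \<le> sqrt (real N) * (2 * c * ?A)" unfolding k2 k3 by (rule k1)
    then have h1: "sqrt (real N) * v \<le> 2 * c * ?A" using sN by (rule mult_left_le_imp_le)
    have e1: "v / (4 * c) / sqrt (real N) = (sqrt (real N) * v) / (4 * c * real N)"
      using sN c0 ss by (simp add: field_simps)
    have "(sqrt (real N) * v) / (4 * c * real N) \<le> (2 * c * ?A) / (4 * c * real N)"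
      by (rule divide_right_mono[OF h1]) (use c0 Npos in simp)
    also have "\<dots> = (1 / real N) * ?A / 2" using c0 Npos by (simp add: field_simps)
    finally show ?thesis using e1 by simp
  qed
  show ?thesis unfolding M_def[symmetric] eq using fin sh unfolding c_def by linarith
qed

theorem mainTheorem13:
  fixes P :: "'a::finite \<Rightarrow> bool \<Rightarrow> 'a pmf"
    and r :: "'a \<Rightarrow> bool \<Rightarrow> real"
    and \<alpha> :: real
    and y :: "'a \<Rightarrow> bool \<Rightarrow> real"
    and st :: 'a
  assumes alpha: "0 < \<alpha>" "\<alpha> < 1"
    and opt: "lp_optimal P r \<alpha> y"
    and tilde: "y st False > 0" "y st True > 0"
    and uniq: "\<forall>s. y s False > 0 \<and> y s True > 0 \<longrightarrow> s = st"
    and Ppos: "\<forall>s a s'. pmf (P s a) s' > 0"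
  shows "\<exists>\<eta>'>0. \<exists>K>0. \<exists>N0::nat. \<forall>N\<ge>N0. \<forall>S :: nat \<Rightarrow> 'a.
           (\<Sum>s\<in>UNIV. \<bar>Xfrac N S s - mu_star y s\<bar>) \<le> \<eta>' \<longrightarrow>
           olc_defined \<alpha> y st N S \<longrightarrow>
           (\<forall>\<xi> :: 'a \<Rightarrow> real. sqrt (\<Sum>s\<in>UNIV. (\<xi> s)\<^sup>2) = 1 \<longrightarrow>
              (\<Sum>s\<in>UNIV. mu_star y s * \<xi> s) = 0 \<longrightarrow>
              (\<forall>act. olc_action \<alpha> y st N S act \<longrightarrow>
                 measure_pmf.expectation (next_states P N S act)
                   (\<lambda>S'. \<bar>\<Sum>s'\<in>UNIV. (Xfrac N S' s' - mu_star y s'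
                        - (\<Sum>s\<in>UNIV. (Xfrac N S s - mu_star y s) * Phi P \<alpha> y st s s')) * \<xi> s'\<bar>)
                 \<ge> K / sqrt (real N)))"
  proof -
  have feas: "lp_feasible P \<alpha> y" using opt by (simp add: lp_optimal_def)
  have ynn: "\<forall>s a. 0 \<le> y s a" using feas by (simp add: lp_feasible_def)
  have munn: "\<forall>s. 0 \<le> mu_star y s" using ynn by (simp add: mu_star_def)
  have musum: "(\<Sum>s\<in>UNIV. mu_star y s) = 1"
    using feas by (simp add: lp_feasible_def mu_star_def UNIV_bool add.commute)
  define pm where "pm = Min ((\<lambda>(s,a,s'). pmf (P s a) s') ` (UNIV :: ('a \<times> bool \<times> 'a) set))"
  have pm0: "0 < pm" unfolding pm_def using Ppos by (subst Min_gr_iff) auto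
  have pml: "\<forall>s a s'. pm \<le> pmf (P s a) s'"
  proof (intro allI)
    fix s a s'
    have "pmf (P s a) s' \<in> (\<lambda>(s,a,s'). pmf (P s a) s') ` (UNIV :: ('a \<times> bool \<times> 'a) set)"
      by (rule image_eqI[of _ _ "(s,a,s')"]) auto
    then show "pm \<le> pmf (P s a) s'" unfolding pm_def by (rule Min_le[rotated]) simp
  qed
  define v where "v = pm / (2 * real CARD('a))"
  have v0: "0 < v" unfolding v_def using pm0 by simp
  define K where "K = v / (4 * sqrt (96 / v))"
  have K0: "0 < K" unfolding K_def using v0 by simp
  show ?thesis
  proof (rule exI[of _ 1], intro conjI, simp, rule exI[of _ K], intro conjI K0, rule exI[of _ 1], intro allI impI)
    fix N :: nat and S :: "nat \<Rightarrow> 'a" and \<xi> :: "'a \<Rightarrow> real" and act :: "nat \<Rightarrow> bool"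
    assume N: "1 \<le> N" and nrm: "sqrt (\<Sum>s\<in>UNIV. (\<xi> s)\<^sup>2) = 1" and orth: "(\<Sum>s\<in>UNIV. mu_star y s * \<xi> s) = 0"
    have n1: "(\<Sum>s\<in>UNIV. (\<xi> s)\<^sup>2) = 1" using nrm by simp
    have xb: "\<forall>x. \<bar>\<xi> x\<bar> \<le> 1"
    proof
      fix x
      have "(\<xi> x)^2 \<le> (\<Sum>s\<in>UNIV. (\<xi> s)\<^sup>2)" by (rule member_le_sum) auto
      then have "(\<xi> x)^2 \<le> 1" using n1 by simp
      then show "\<bar>\<xi> x\<bar> \<le> 1" using abs_square_le_1 by blast
    qed
    obtain u w where uw: "u \<noteq> w" "1 / real CARD('a) \<le> (\<xi> u - \<xi> w)^2"
      using xi_sep[OF n1 orth munn musum] by blast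
    define D where "D = (\<lambda>s'. \<Sum>s\<in>UNIV. (Xfrac N S s - mu_star y s) * Phi P \<alpha> y st s s')"
    define d where "d = - (\<Sum>s'\<in>UNIV. (mu_star y s' + D s') * \<xi> s')"
    have eqp: "(\<Sum>s'\<in>UNIV. (Xfrac N S' s' - mu_star y s' - D s') * \<xi> s') = (1 / real N) * (\<Sum>i<N. \<xi> (S' i)) + d"
      for S'
    proof -
      have "(\<Sum>s'\<in>UNIV. (Xfrac N S' s' - mu_star y s' - D s') * \<xi> s')
          = (\<Sum>s'\<in>UNIV. Xfrac N S' s' * \<xi> s' - (mu_star y s' + D s') * \<xi> s')"
        by (rule sum.cong) (auto simp: algebra_simps)
      also have "\<dots> = (\<Sum>s'\<in>UNIV. Xfrac N S' s' * \<xi> s') + d"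
        unfolding d_def by (simp add: sum_subtractf)
      also have "(\<Sum>s'\<in>UNIV. Xfrac N S' s' * \<xi> s') = (1 / real N) * (\<Sum>s'\<in>UNIV. real (cnt N S' s') * \<xi> s')"
        by (simp add: Xfrac_def sum_distrib_left)
      also have "\<dots> = (1 / real N) * (\<Sum>i<N. \<xi> (S' i))" by (simp add: cnt_sum)
      finally show ?thesis .
    qed
    have "K / sqrt (real N) \<le> measure_pmf.expectation (next_states P N S act)
           (\<lambda>S'. \<bar>(1 / real N) * (\<Sum>i<N. \<xi> (S' i)) + d\<bar>)"
      unfolding K_def by (rule core[OF N pm0 pml uw xb v_def])
    then show "K / sqrt (real N) \<le> measure_pmf.expectation (next_states P N S act)
           (\<lambda>S'. \<bar>\<Sum>s'\<in>UNIV. (Xfrac N S' s' - mu_star y s'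
                        - (\<Sum>s\<in>UNIV. (Xfrac N S s - mu_star y s) * Phi P \<alpha> y st s s')) * \<xi> s'\<bar>)"
      using eqp unfolding D_def by simp
  qed
qed

end
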